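(* Let $\mathcal{H}$ be a Hilbert space of finite or countably infinite dimension, $\Omega$ a finite set and $\mathcal{I}$ an instrument on $\Omega$ that is repeatable, i.e. $\mathrm{tr}[\varrho\,\mathcal{I}_{\omega_1}\circ\mathcal{I}_{\omega_2}(\mathbb{1})]=0$ for all states $\varrho$ and all $\omega_1\neq\omega_2$. Then $\mathrm{sat}(\mathcal{I})=1$.
   Context: An instrument on a finite set $\Omega$ (Heisenberg picture) is a family $(\mathcal{I}_\omega)_{\omega\in\Omega}$ of normal completely positive maps on $\mathcal{L}(\mathcal{H})$ with $\sum_\omega\mathcal{I}_\omega(\mathbb{1})=\mathbb{1}$. For observables $\mathsf{A},\mathsf{B}$ with finite outcome sets (maps into positive operators summing to $\mathbb{1}$), $\mathsf{A}\preceq\mathsf{B}$ means there is $\kappa:\Omega_\mathsf{A}\times\Omega_\mathsf{B}\to[0,1]$ with $\sum_\omega\kappa(\omega|\omega')=1$ for all $\omega'$ and $\mathsf{A}(\omega)=\sum_{\omega'}\kappa(\omega|\omega')\mathsf{B}(\omega')$; $\mathsf{A}\simeq\mathsf{B}$ means both directions hold. $\mathsf{A}^\mathcal{I}_n(\omega_1,\ldots,\omega_n)=\mathcal{I}_{\omega_1}\circ\cdots\circ\mathcal{I}_{\omega_n}(\mathbb{1})$ on $\Omega^n$. The saturation step $\mathrm{sat}(\mathcal{I})$ is the smallest positive integer $n$ with $\mathsf{A}^\mathcal{I}_n\simeq\mathsf{A}^\mathcal{I}_{n+1}$ ($\infty$ if none). *)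

theory Defs
  imports Complex_Main "HOL-Library.Function_Algebras" "HOL-Library.Extended_Nat"
begin

text \<open>The Hilbert space is modelled concretely as l2(D) for an index set D of naturals
  (D finite: finite dimension card D; D infinite: countably infinite dimension).
  Bounded operators are maps vec => vec, linear and bounded on l2(D), mapping l2(D) into
  itself and sending everything outside l2(D) to 0 (a normalisation making equality of
  operators plain equality of functions).\<close>

type_synonym vec = "nat \<Rightarrow> complex"
type_synonym op = "vec \<Rightarrow> vec"

definition l2 :: "nat set \<Rightarrow> vec set" where
  "l2 D = {x. (\<forall>i. i \<notin> D \<longrightarrow> x i = 0) \<and> summable (\<lambda>i. (cmod (x i))^2)}"

definition inner_l2 :: "vec \<Rightarrow> vec \<Rightarrow> complex" where
  "inner_l2 x y = (\<Sum>i. cnj (x i) * y i)"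

definition norm_l2 :: "vec \<Rightarrow> real" where
  "norm_l2 x = sqrt (\<Sum>i. (cmod (x i))^2)"

definition bounded_op :: "nat set \<Rightarrow> op \<Rightarrow> bool" where
  "bounded_op D T \<longleftrightarrow>
     (\<forall>x. x \<notin> l2 D \<longrightarrow> T x = 0) \<and>
     (\<forall>x\<in>l2 D. T x \<in> l2 D) \<and>
     (\<forall>x\<in>l2 D. \<forall>y\<in>l2 D. \<forall>a b. T (\<lambda>i. a * x i + b * y i) = (\<lambda>i. a * T x i + b * T y i)) \<and>
     (\<exists>C. \<forall>x\<in>l2 D. norm_l2 (T x) \<le> C * norm_l2 x)"

definition id_op :: "nat set \<Rightarrow> op" where
  "id_op D = (\<lambda>x. if x \<in> l2 D then x else 0)"

definition positive_op :: "nat set \<Rightarrow> op \<Rightarrow> bool" where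
  "positive_op D T \<longleftrightarrow> bounded_op D T \<and>
     (\<forall>x\<in>l2 D. Im (inner_l2 x (T x)) = 0 \<and> Re (inner_l2 x (T x)) \<ge> 0)"

definition block_positive :: "nat set \<Rightarrow> nat \<Rightarrow> (nat \<Rightarrow> nat \<Rightarrow> op) \<Rightarrow> bool" where
  "block_positive D n T \<longleftrightarrow>
     (\<forall>i<n. \<forall>j<n. bounded_op D (T i j)) \<and>
     (\<forall>x. (\<forall>i<n. x i \<in> l2 D) \<longrightarrow>
        Im (\<Sum>i<n. \<Sum>j<n. inner_l2 (x i) (T i j (x j))) = 0 \<and>
        Re (\<Sum>i<n. \<Sum>j<n. inner_l2 (x i) (T i j (x j))) \<ge> 0)"

definition lin_comb_op :: "complex \<Rightarrow> op \<Rightarrow> complex \<Rightarrow> op \<Rightarrow> op" where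
  "lin_comb_op a S b T = (\<lambda>x i. a * S x i + b * T x i)"

definition linear_map :: "nat set \<Rightarrow> (op \<Rightarrow> op) \<Rightarrow> bool" where
  "linear_map D \<Phi> \<longleftrightarrow>
     (\<forall>T. bounded_op D T \<longrightarrow> bounded_op D (\<Phi> T)) \<and>
     (\<forall>S T a b. bounded_op D S \<longrightarrow> bounded_op D T \<longrightarrow>
        \<Phi> (lin_comb_op a S b T) = lin_comb_op a (\<Phi> S) b (\<Phi> T))"

text \<open>Complete positivity: id_n tensor Phi is positive for every n.\<close>
definition cp_map :: "nat set \<Rightarrow> (op \<Rightarrow> op) \<Rightarrow> bool" where
  "cp_map D \<Phi> \<longleftrightarrow> (\<forall>n T. block_positive D n T \<longrightarrow> block_positive D n (\<lambda>i j. \<Phi> (T i j)))"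

text \<open>Normality: for increasing sequences of positive operators converging weakly to
  their supremum T, the images converge weakly to the image of T (for separable H this is
  equivalent to normality).\<close>
definition normal_map :: "nat set \<Rightarrow> (op \<Rightarrow> op) \<Rightarrow> bool" where
  "normal_map D \<Phi> \<longleftrightarrow>
     (\<forall>Tk T. (\<forall>k. positive_op D (Tk k)) \<and> (\<forall>k. positive_op D (Tk (Suc k) - Tk k)) \<and>
        bounded_op D T \<and> (\<forall>x\<in>l2 D. (\<lambda>k. inner_l2 x (Tk k x)) \<longlonglongrightarrow> inner_l2 x (T x))
      \<longrightarrow> (\<forall>x\<in>l2 D. (\<lambda>k. inner_l2 x (\<Phi> (Tk k) x)) \<longlonglongrightarrow> inner_l2 x (\<Phi> T x)))"

definition instrument :: "nat set \<Rightarrow> 'w set \<Rightarrow> ('w \<Rightarrow> op \<Rightarrow> op) \<Rightarrow> bool" where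
  "instrument D \<Omega> I \<longleftrightarrow> finite \<Omega> \<and>
     (\<forall>\<omega>\<in>\<Omega>. linear_map D (I \<omega>) \<and> cp_map D (I \<omega>) \<and> normal_map D (I \<omega>)) \<and>
     (\<Sum>\<omega>\<in>\<Omega>. I \<omega> (id_op D)) = id_op D"

definition basis_vec :: "nat \<Rightarrow> vec" where
  "basis_vec i = (\<lambda>j. if j = i then 1 else 0)"

definition trace_op :: "nat set \<Rightarrow> op \<Rightarrow> complex" where
  "trace_op D T = (\<Sum>i. if i \<in> D then inner_l2 (basis_vec i) (T (basis_vec i)) else 0)"

definition is_state :: "nat set \<Rightarrow> op \<Rightarrow> bool" where
  "is_state D \<rho> \<longleftrightarrow> positive_op D \<rho> \<and>
     (\<lambda>i. if i \<in> D then inner_l2 (basis_vec i) (\<rho> (basis_vec i)) else 0) sums 1"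

definition repeatable :: "nat set \<Rightarrow> 'w set \<Rightarrow> ('w \<Rightarrow> op \<Rightarrow> op) \<Rightarrow> bool" where
  "repeatable D \<Omega> I \<longleftrightarrow>
     (\<forall>\<rho>. is_state D \<rho> \<longrightarrow> (\<forall>\<omega>1\<in>\<Omega>. \<forall>\<omega>2\<in>\<Omega>. \<omega>1 \<noteq> \<omega>2 \<longrightarrow>
        trace_op D (\<rho> \<circ> I \<omega>1 (I \<omega>2 (id_op D))) = 0))"

definition scale_op :: "real \<Rightarrow> op \<Rightarrow> op" where
  "scale_op c T = (\<lambda>x i. complex_of_real c * T x i)"

definition postproc :: "'a set \<Rightarrow> ('a \<Rightarrow> op) \<Rightarrow> 'b set \<Rightarrow> ('b \<Rightarrow> op) \<Rightarrow> bool" where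
  "postproc \<Omega>A A \<Omega>B B \<longleftrightarrow> (\<exists>\<kappa> :: 'a \<Rightarrow> 'b \<Rightarrow> real.
     (\<forall>\<omega>\<in>\<Omega>A. \<forall>\<omega>'\<in>\<Omega>B. 0 \<le> \<kappa> \<omega> \<omega>' \<and> \<kappa> \<omega> \<omega>' \<le> 1) \<and>
     (\<forall>\<omega>'\<in>\<Omega>B. (\<Sum>\<omega>\<in>\<Omega>A. \<kappa> \<omega> \<omega>') = 1) \<and>
     (\<forall>\<omega>\<in>\<Omega>A. A \<omega> = (\<Sum>\<omega>'\<in>\<Omega>B. scale_op (\<kappa> \<omega> \<omega>') (B \<omega>'))))"

definition obs_equiv :: "'a set \<Rightarrow> ('a \<Rightarrow> op) \<Rightarrow> 'b set \<Rightarrow> ('b \<Rightarrow> op) \<Rightarrow> bool" where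
  "obs_equiv \<Omega>A A \<Omega>B B \<longleftrightarrow> postproc \<Omega>A A \<Omega>B B \<and> postproc \<Omega>B B \<Omega>A A"

definition outcomes :: "'w set \<Rightarrow> nat \<Rightarrow> 'w list set" where
  "outcomes \<Omega> n = {xs. length xs = n \<and> set xs \<subseteq> \<Omega>}"

definition seq_obs :: "nat set \<Rightarrow> ('w \<Rightarrow> op \<Rightarrow> op) \<Rightarrow> 'w list \<Rightarrow> op" where
  "seq_obs D I xs = foldr (\<lambda>\<omega> T. I \<omega> T) xs (id_op D)"

definition sat :: "nat set \<Rightarrow> 'w set \<Rightarrow> ('w \<Rightarrow> op \<Rightarrow> op) \<Rightarrow> enat" where
  "sat D \<Omega> I =
     (if \<exists>n\<ge>1. obs_equiv (outcomes \<Omega> n) (seq_obs D I) (outcomes \<Omega> (Suc n)) (seq_obs D I)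
      then enat (LEAST n. n \<ge> 1 \<and>
              obs_equiv (outcomes \<Omega> n) (seq_obs D I) (outcomes \<Omega> (Suc n)) (seq_obs D I))
      else \<infinity>)"

end

theory Submission
  imports Defs
begin

lemma sq_le: "(cmod (a*x+b*y))^2 \<le> 2*(cmod a)^2*(cmod x)^2 + 2*(cmod b)^2*(cmod y)^2"
proof -
  have "cmod (a*x+b*y) \<le> cmod a * cmod x + cmod b * cmod y"
    by (metis norm_mult norm_triangle_ineq)
  hence "(cmod (a*x+b*y))^2 \<le> (cmod a * cmod x + cmod b * cmod y)^2"
    by (simp add: power_mono)
  also have "\<dots> \<le> 2*(cmod a)^2*(cmod x)^2 + 2*(cmod b)^2*(cmod y)^2"
  proof -
    have "0 \<le> (cmod a * cmod x - cmod b * cmod y)^2" by simp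
    thus ?thesis by (simp add: power2_eq_square algebra_simps)
  qed
  finally show ?thesis .
qed

lemma l2_lin: "x \<in> l2 D \<Longrightarrow> y \<in> l2 D \<Longrightarrow> (\<lambda>i. a * x i + b * y i) \<in> l2 D"
  unfolding l2_def
proof (clarsimp)
  assume "\<forall>i. i \<notin> D \<longrightarrow> x i = 0" "summable (\<lambda>i. (cmod (x i))\<^sup>2)"
     "\<forall>i. i \<notin> D \<longrightarrow> y i = 0" "summable (\<lambda>i. (cmod (y i))\<^sup>2)"
  show "summable (\<lambda>i. (cmod (a * x i + b * y i))\<^sup>2)"
    apply (rule summable_comparison_test[where g="\<lambda>i. 2*(cmod a)^2*(cmod (x i))^2 + 2*(cmod b)^2*(cmod (y i))^2"])
     apply (simp add: sq_le)
    using \<open>summable (\<lambda>i. (cmod (x i))\<^sup>2)\<close> \<open>summable (\<lambda>i. (cmod (y i))\<^sup>2)\<close>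
    by (intro summable_add summable_mult) 
qed

lemma l2_summ: "x \<in> l2 D \<Longrightarrow> summable (\<lambda>i. (cmod (x i))^2)" by (simp add: l2_def)
lemma l2_zero: "x \<in> l2 D \<Longrightarrow> i \<notin> D \<Longrightarrow> x i = 0" by (simp add: l2_def)

lemma l2_add: "x \<in> l2 D \<Longrightarrow> y \<in> l2 D \<Longrightarrow> (\<lambda>i. x i + y i) \<in> l2 D"
  using l2_lin[of x D y 1 1] by simp

lemma suminf_sq_nonneg: "x \<in> l2 D \<Longrightarrow> 0 \<le> (\<Sum>i. (cmod (x i))^2)"
  by (rule suminf_nonneg[OF l2_summ]) auto

lemma norm_l2_nonneg: "x \<in> l2 D \<Longrightarrow> 0 \<le> norm_l2 x"
  unfolding norm_l2_def using suminf_sq_nonneg by simp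

lemma comp_le_norm: assumes "x \<in> l2 D" shows "cmod (x i) \<le> norm_l2 x"
proof -
  have "(\<Sum>n\<in>{i}. (cmod (x n))^2) \<le> (\<Sum>n. (cmod (x n))^2)"
    by (rule sum_le_suminf[OF l2_summ[OF assms]]) auto
  hence "sqrt ((cmod (x i))^2) \<le> norm_l2 x" unfolding norm_l2_def
    by (intro real_sqrt_le_mono) simp
  thus ?thesis by simp
qed

lemma norm_add_le: assumes x: "x \<in> l2 D" and y: "y \<in> l2 D"
  shows "norm_l2 (\<lambda>i. x i + y i) \<le> sqrt 2 * (norm_l2 x + norm_l2 y)"
proof -
  define A where "A = (\<Sum>i. (cmod (x i))^2)"
  define B where "B = (\<Sum>i. (cmod (y i))^2)"
  have A0: "0 \<le> A" "0 \<le> B" using suminf_sq_nonneg x y A_def B_def by auto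
  have "(\<Sum>i. (cmod (x i + y i))^2) \<le> (\<Sum>i. 2*(cmod (x i))^2 + 2*(cmod (y i))^2)"
    apply (rule suminf_le)
    using sq_le[of 1 _ 1] apply simp
    using l2_summ[OF l2_add[OF x y]] apply simp
    using l2_summ[OF x] l2_summ[OF y] by (intro summable_add summable_mult)
  also have "\<dots> = 2*A + 2*B" unfolding A_def B_def
    using l2_summ[OF x] l2_summ[OF y]
    by (simp add: suminf_add[symmetric] suminf_mult summable_mult)
  finally have "norm_l2 (\<lambda>i. x i + y i) \<le> sqrt (2*(A+B))"
    unfolding norm_l2_def by (simp add: algebra_simps)
  also have "\<dots> = sqrt 2 * sqrt (A + B)" by (simp add: real_sqrt_mult[symmetric])
  also have "\<dots> \<le> sqrt 2 * (sqrt A + sqrt B)"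
    using sqrt_add_le_add_sqrt[OF A0] by simp
  finally show ?thesis unfolding norm_l2_def A_def B_def .
qed

lemma bounded_zero: "bounded_op D 0"
proof -
  have z: "(0::vec) \<in> l2 D" by (simp add: l2_def zero_fun_def)
  have n: "norm_l2 0 = 0" by (simp add: norm_l2_def)
  show ?thesis unfolding bounded_op_def using z n
    by (auto simp: zero_fun_def intro!: exI[of _ 0])
qed

lemma bounded_add: assumes S: "bounded_op D S" and T: "bounded_op D T"
  shows "bounded_op D (S + T)"
proof -
  obtain CS where CS: "\<forall>x\<in>l2 D. norm_l2 (S x) \<le> CS * norm_l2 x" using S bounded_op_def by blast
  obtain CT where CT: "\<forall>x\<in>l2 D. norm_l2 (T x) \<le> CT * norm_l2 x" using T bounded_op_def by blast
  have Sl: "\<forall>x\<in>l2 D. S x \<in> l2 D" and Tl: "\<forall>x\<in>l2 D. T x \<in> l2 D" using S T bounded_op_def by auto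
  have eq: "(S + T) x = (\<lambda>i. S x i + T x i)" for x by (simp add: plus_fun_def)
  have "norm_l2 ((S + T) x) \<le> (sqrt 2 * (max CS 0 + max CT 0)) * norm_l2 x" if x: "x \<in> l2 D" for x
  proof -
    have nx: "0 \<le> norm_l2 x" using norm_l2_nonneg x by blast
    have "norm_l2 (S x) \<le> max CS 0 * norm_l2 x"
      using CS x nx by (meson order_trans mult_right_mono max.cobounded1)
    moreover have "norm_l2 (T x) \<le> max CT 0 * norm_l2 x"
      using CT x nx by (meson order_trans mult_right_mono max.cobounded1)
    ultimately have "sqrt 2 * (norm_l2 (S x) + norm_l2 (T x)) \<le> sqrt 2 * (max CS 0 * norm_l2 x + max CT 0 * norm_l2 x)"
      by simp
    thus ?thesis unfolding eq using norm_add_le[of "S x" D "T x"] Sl Tl x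
      by (simp add: algebra_simps)
  qed
  moreover have "\<forall>x\<in>l2 D. (S+T) x \<in> l2 D" using Sl Tl eq l2_add by auto
  moreover have "\<forall>x. x \<notin> l2 D \<longrightarrow> (S+T) x = 0" using S T unfolding bounded_op_def by auto
  moreover have "\<forall>x\<in>l2 D. \<forall>y\<in>l2 D. \<forall>a b. (S+T) (\<lambda>i. a * x i + b * y i) = (\<lambda>i. a * (S+T) x i + b * (S+T) y i)"
    using S T unfolding bounded_op_def by (auto simp: algebra_simps)
  ultimately show ?thesis unfolding bounded_op_def by blast
qed

lemma bounded_sum: "finite F \<Longrightarrow> (\<forall>j\<in>F. bounded_op D (f j)) \<Longrightarrow> bounded_op D (\<Sum>j\<in>F. f j)"
  by (induction F rule: finite_induct) (auto intro: bounded_zero bounded_add)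

lemma lin_zero: assumes "linear_map D \<Phi>" shows "\<Phi> 0 = 0"
proof -
  have "lin_comb_op 0 0 0 0 = 0" by (auto simp: lin_comb_op_def fun_eq_iff)
  hence "\<Phi> 0 = lin_comb_op 0 (\<Phi> 0) 0 (\<Phi> 0)"
    using assms bounded_zero unfolding linear_map_def by metis
  thus ?thesis by (auto simp: lin_comb_op_def fun_eq_iff)
qed

lemma lin_add: assumes "linear_map D \<Phi>" "bounded_op D S" "bounded_op D T"
  shows "\<Phi> (S + T) = \<Phi> S + \<Phi> T"
proof -
  have e: "lin_comb_op 1 A 1 B = A + B" for A B by (auto simp: lin_comb_op_def fun_eq_iff)
  show ?thesis using assms unfolding linear_map_def by (metis e)
qed

lemma lin_sum: assumes L: "linear_map D \<Phi>" shows "finite F \<Longrightarrow> (\<forall>j\<in>F. bounded_op D (f j)) \<Longrightarrow>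
   \<Phi> (\<Sum>j\<in>F. f j) = (\<Sum>j\<in>F. \<Phi> (f j))"
proof (induction F rule: finite_induct)
  case empty thus ?case using lin_zero[OF L] by (simp add: zero_fun_def)
next
  case (insert a F)
  have b: "bounded_op D (sum f F)" "bounded_op D (f a)" using insert bounded_sum[of F D f] by auto
  have "\<Phi> (\<Sum>j\<in>insert a F. f j) = \<Phi> (f a + (\<Sum>j\<in>F. f j))"
    by (simp only: sum.insert[OF insert.hyps(1,2)])
  also have "\<dots> = \<Phi> (f a) + \<Phi> (\<Sum>j\<in>F. f j)" by (rule lin_add[OF L b(2) b(1)])
  also have "\<dots> = \<Phi> (f a) + (\<Sum>j\<in>F. \<Phi> (f j))" using insert by simp
  also have "\<dots> = (\<Sum>j\<in>insert a F. \<Phi> (f j))"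
    by (simp only: sum.insert[OF insert.hyps(1,2)])
  finally show ?case .
qed

lemma bounded_id: "bounded_op D (id_op D)"
  unfolding bounded_op_def id_op_def
  by (auto simp: l2_lin zero_fun_def intro!: exI[of _ 1])

lemma inner_fin: "finite F \<Longrightarrow> (\<forall>j. j \<notin> F \<longrightarrow> v j = 0) \<Longrightarrow> inner_l2 v x = (\<Sum>j\<in>F. cnj (v j) * x j)"
  unfolding inner_l2_def by (rule suminf_finite) auto

lemma inner_fin2: "finite F \<Longrightarrow> (\<forall>j. j \<notin> F \<longrightarrow> v j = 0) \<Longrightarrow> inner_l2 x v = (\<Sum>j\<in>F. cnj (x j) * v j)"
  unfolding inner_l2_def by (rule suminf_finite) auto

lemma inner_basis: "inner_l2 (basis_vec j) x = x j"
  using inner_fin[of "{j}" "basis_vec j" x] by (simp add: basis_vec_def)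

lemma inner_basis2: "finite F \<Longrightarrow> (\<forall>j. j \<notin> F \<longrightarrow> v j = 0) \<Longrightarrow> inner_l2 v (basis_vec j) = cnj (v j)"
proof -
  assume F: "finite F" "\<forall>j. j \<notin> F \<longrightarrow> v j = 0"
  have "inner_l2 v (basis_vec j) = (\<Sum>i\<in>F. cnj (v i) * basis_vec j i)" by (rule inner_fin[OF F])
  also have "\<dots> = (\<Sum>i\<in>F. if i = j then cnj (v j) else 0)"
    by (rule sum.cong) (auto simp: basis_vec_def)
  also have "\<dots> = cnj (v j)" using F by auto
  finally show ?thesis .
qed

lemma fin_l2: "finite F \<Longrightarrow> F \<subseteq> D \<Longrightarrow> (\<forall>j. j \<notin> F \<longrightarrow> v j = 0) \<Longrightarrow> v \<in> l2 D"
  unfolding l2_def by (auto intro!: summable_finite[of F])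

lemma basis_l2: "j \<in> D \<Longrightarrow> basis_vec j \<in> l2 D"
  by (rule fin_l2[of "{j}"]) (auto simp: basis_vec_def)

lemma basis_notl2: "j \<notin> D \<Longrightarrow> basis_vec j \<notin> l2 D"
  unfolding l2_def basis_vec_def by auto

definition rk :: "nat set \<Rightarrow> vec \<Rightarrow> op" where
  "rk D v = (\<lambda>x. if x \<in> l2 D then (\<lambda>m. inner_l2 v x * v m) else 0)"

lemma rk_state:
  assumes F: "finite F" "F \<subseteq> D" and vz: "\<forall>j. j \<notin> F \<longrightarrow> v j = 0"
    and vn: "(\<Sum>j\<in>F. (cmod (v j))^2) = 1"
  shows "is_state D (rk D v)"
proof -
  have vl: "v \<in> l2 D" by (rule fin_l2[OF F vz])
  have img: "(\<lambda>m. c * v m) \<in> l2 D" for c using l2_lin[OF vl vl, of c 0] by simp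
  have nv: "norm_l2 (\<lambda>m. c * v m) = cmod c" for c
  proof -
    have "(\<Sum>m. (cmod (c * v m))^2) = (\<Sum>m\<in>F. (cmod (c * v m))^2)"
      by (rule suminf_finite[OF F(1)]) (simp add: vz)
    also have "\<dots> = (cmod c)^2 * (\<Sum>m\<in>F. (cmod (v m))^2)"
      by (simp add: sum_distrib_left norm_mult power_mult_distrib)
    finally show ?thesis unfolding norm_l2_def using vn by simp
  qed
  have lin: "rk D v (\<lambda>i. a * x i + b * y i) = (\<lambda>i. a * rk D v x i + b * rk D v y i)"
    if x: "x \<in> l2 D" and y: "y \<in> l2 D" for x y a b
  proof -
    have "inner_l2 v (\<lambda>i. a * x i + b * y i) = a * inner_l2 v x + b * inner_l2 v y"
      using inner_fin[OF F(1) vz]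
      by (simp add: sum.distrib sum_distrib_left algebra_simps)
    thus ?thesis using x y l2_lin[OF x y] unfolding rk_def by (auto simp: algebra_simps)
  qed
  have bnd: "norm_l2 (rk D v x) \<le> (\<Sum>j\<in>F. cmod (v j)) * norm_l2 x" if x: "x \<in> l2 D" for x
  proof -
    have "norm_l2 (rk D v x) = cmod (inner_l2 v x)" using x nv unfolding rk_def by simp
    also have "\<dots> = cmod (\<Sum>j\<in>F. cnj (v j) * x j)" using inner_fin[OF F(1) vz] by simp
    also have "\<dots> \<le> (\<Sum>j\<in>F. cmod (v j) * cmod (x j))"
      by (rule order_trans[OF norm_sum]) (simp add: norm_mult)
    also have "\<dots> \<le> (\<Sum>j\<in>F. cmod (v j) * norm_l2 x)"
      by (rule sum_mono) (simp add: mult_left_mono comp_le_norm[OF x])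
    finally show ?thesis by (simp add: sum_distrib_right)
  qed
  have bo: "bounded_op D (rk D v)"
    unfolding bounded_op_def
  proof (intro conjI)
    show "\<exists>C. \<forall>x\<in>l2 D. norm_l2 (rk D v x) \<le> C * norm_l2 x" using bnd by blast
  qed (use lin img in \<open>auto simp: rk_def\<close>)
  have pos: "Im (inner_l2 x (rk D v x)) = 0 \<and> Re (inner_l2 x (rk D v x)) \<ge> 0" if x: "x \<in> l2 D" for x
  proof -
    define c where "c = inner_l2 v x"
    have "inner_l2 x (rk D v x) = (\<Sum>j\<in>F. cnj (x j) * (c * v j))"
      using x inner_fin2[OF F(1), of "\<lambda>m. c * v m" x] vz unfolding rk_def c_def by simp
    also have "\<dots> = c * cnj (\<Sum>j\<in>F. cnj (v j) * x j)"
      by (simp add: sum_distrib_left algebra_simps)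
    also have "\<dots> = c * cnj c" using inner_fin[OF F(1) vz] c_def by simp
    also have "\<dots> = complex_of_real ((cmod c)^2)" by (rule complex_norm_square[symmetric])
    finally show ?thesis by simp
  qed
  have diag: "(if j \<in> D then inner_l2 (basis_vec j) (rk D v (basis_vec j)) else 0) = complex_of_real ((cmod (v j))^2)" for j
  proof (cases "j \<in> D")
    case True
    have "inner_l2 (basis_vec j) (rk D v (basis_vec j)) = inner_l2 v (basis_vec j) * v j"
      using basis_l2[OF True] by (simp add: rk_def inner_basis)
    also have "\<dots> = cnj (v j) * v j" using inner_basis2[OF F(1) vz] by simp
    also have "\<dots> = complex_of_real ((cmod (v j))^2)" using complex_norm_square[of "v j"] by (simp add: mult.commute)
    finally show ?thesis using True by simp
  next
    case False thus ?thesis using F vz by auto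
  qed
  have "(\<lambda>j. complex_of_real ((cmod (v j))^2)) sums (\<Sum>j\<in>F. complex_of_real ((cmod (v j))^2))"
    by (rule sums_finite[OF F(1)]) (simp add: vz)
  hence "(\<lambda>j. complex_of_real ((cmod (v j))^2)) sums 1" using vn
    by (metis of_real_1 of_real_sum)
  thus ?thesis unfolding is_state_def positive_op_def using bo pos diag by simp
qed

lemma rk_trace:
  assumes F: "finite F" "F \<subseteq> D" and vz: "\<forall>j. j \<notin> F \<longrightarrow> v j = 0"
    and T: "bounded_op D T"
  shows "trace_op D (rk D v \<circ> T) = (\<Sum>j\<in>F. (\<Sum>m\<in>F. cnj (v m) * T (basis_vec j) m) * v j)"
proof -
  have tm: "(if j \<in> D then inner_l2 (basis_vec j) ((rk D v \<circ> T) (basis_vec j)) else 0)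
     = (\<Sum>m\<in>F. cnj (v m) * T (basis_vec j) m) * v j" for j
  proof (cases "j \<in> D")
    case True
    have "T (basis_vec j) \<in> l2 D" using T basis_l2[OF True] unfolding bounded_op_def by blast
    thus ?thesis using True inner_fin[OF F(1) vz] by (simp add: rk_def inner_basis)
  next
    case False thus ?thesis using F vz by auto
  qed
  show ?thesis unfolding trace_op_def tm
    by (rule suminf_finite[OF F(1)]) (simp add: vz)
qed

lemma entries_zero:
  assumes T: "bounded_op D T" and Z: "\<forall>\<rho>. is_state D \<rho> \<longrightarrow> trace_op D (\<rho> \<circ> T) = 0"
  shows "\<forall>a\<in>D. \<forall>b\<in>D. T (basis_vec b) a = 0"
proof -
  define t where "t a b = T (basis_vec b) a" for a b
  have Q: "(\<Sum>j\<in>F. (\<Sum>m\<in>F. cnj (v m) * t m j) * v j) = 0"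
    if F: "finite F" "F \<subseteq> D" and vz: "\<forall>j. j \<notin> F \<longrightarrow> v j = 0"
      and vn: "(\<Sum>j\<in>F. (cmod (v j))^2) = 1" for F v
    using Z rk_state[OF F vz vn] rk_trace[OF F vz T] unfolding t_def by simp
  have dg: "t i i = 0" if i: "i \<in> D" for i
    using Q[of "{i}" "basis_vec i"] i by (simp add: basis_vec_def)
  define r :: real where "r = 1 / sqrt 2"
  have r2: "r^2 = 1/2" unfolding r_def by (simp add: power_divide)
  define R where "R = complex_of_real r"
  have RR: "R * R = 1/2" unfolding R_def using r2
    by (metis of_real_mult power2_eq_square of_real_divide of_real_1 of_real_numeral)
  have cR: "cnj R = R" unfolding R_def by simp
  have off: "t i k = 0" if i: "i \<in> D" and k: "k \<in> D" and ik: "i \<noteq> k" for i k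
  proof -
    define v1 where "v1 j = (if j = i then R else if j = k then R else 0)" for j
    define v2 where "v2 j = (if j = i then R else if j = k then \<i> * R else 0)" for j
    have n1: "(\<Sum>j\<in>{i,k}. (cmod (v1 j))^2) = 1" using ik r2 unfolding v1_def R_def by simp
    have n2: "(\<Sum>j\<in>{i,k}. (cmod (v2 j))^2) = 1" using ik r2 unfolding v2_def R_def by (simp add: norm_mult)
    have q1: "(\<Sum>j\<in>{i,k}. (\<Sum>m\<in>{i,k}. cnj (v1 m) * t m j) * v1 j) = 0"
      by (rule Q) (use i k n1 in \<open>auto simp: v1_def\<close>)
    have q2: "(\<Sum>j\<in>{i,k}. (\<Sum>m\<in>{i,k}. cnj (v2 m) * t m j) * v2 j) = 0"
      by (rule Q) (use i k n2 in \<open>auto simp: v2_def\<close>)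
    have e1: "R * R * (t k i + t i k) = 0" using q1 ik dg[OF i] dg[OF k] cR
      unfolding v1_def by (simp add: algebra_simps)
    have e2: "R * R * (\<i> * t i k - \<i> * t k i) = 0" using q2 ik dg[OF i] dg[OF k] cR
      unfolding v2_def by (simp add: algebra_simps)
    have "t k i + t i k = 0" "\<i> * t i k - \<i> * t k i = 0" using e1 e2 RR by auto
    hence "t i k - t k i = 0" by (metis complex_i_not_zero mult_eq_0_iff right_diff_distrib)
    hence "t k i = t i k" by simp
    with \<open>t k i + t i k = 0\<close> have "2 * t i k = 0" by simp
    thus ?thesis by simp
  qed
  show ?thesis unfolding t_def[symmetric] using dg off by metis
qed

lemma zero_l2: "(0::vec) \<in> l2 D" by (simp add: l2_def zero_fun_def)

lemma bounded_T0: assumes T: "bounded_op D T" shows "T 0 = 0"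
proof -
  have e: "(0::vec) = (\<lambda>i. 0 * (0::vec) i + 0 * (0::vec) i)" by (simp add: fun_eq_iff)
  have l: "T (\<lambda>i. 0 * (0::vec) i + 0 * (0::vec) i) = (\<lambda>i. 0 * T 0 i + 0 * T 0 i)"
    using T zero_l2 unfolding bounded_op_def by blast
  have "T 0 = (\<lambda>i. 0 * T 0 i + 0 * T 0 i)" by (subst e, rule l)
  thus ?thesis by (simp add: fun_eq_iff)
qed

lemma basis_zero_imp_zero:
  assumes T: "bounded_op D T" and E: "\<forall>a\<in>D. \<forall>b\<in>D. T (basis_vec b) a = 0"
  shows "T = 0"
proof -
  have Tb: "T (basis_vec b) = 0" for b
  proof (cases "b \<in> D")
    case True
    hence "T (basis_vec b) \<in> l2 D" using T basis_l2 unfolding bounded_op_def by blast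
    thus ?thesis using E True by (auto simp: fun_eq_iff l2_def)
  next
    case False thus ?thesis using T basis_notl2 unfolding bounded_op_def by blast
  qed
  obtain C where C: "\<forall>x\<in>l2 D. norm_l2 (T x) \<le> C * norm_l2 x" using T bounded_op_def by blast
  have lin: "\<And>x y a b. x \<in> l2 D \<Longrightarrow> y \<in> l2 D \<Longrightarrow> T (\<lambda>i. a * x i + b * y i) = (\<lambda>i. a * T x i + b * T y i)"
    using T unfolding bounded_op_def by blast
  have Tl: "\<And>x. x \<in> l2 D \<Longrightarrow> T x \<in> l2 D" using T unfolding bounded_op_def by blast
  have "T x = 0" for x
  proof (cases "x \<in> l2 D")
    case False thus ?thesis using T unfolding bounded_op_def by blast
  next
    case x: True
    define tr where "tr N = (\<lambda>j. if j < N then x j else 0)" for N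
    define rs where "rs N = (\<lambda>j. if j < N then 0 else x j)" for N
    define f where "f j = (cmod (x j))^2" for j
    have fs: "summable f" using l2_summ[OF x] unfolding f_def[abs_def] by simp
    have trl: "tr N \<in> l2 D" for N
      unfolding l2_def tr_def using l2_zero[OF x]
      by (auto intro!: summable_finite[of "{..<N}"] split: if_splits)
    have rsl: "rs N \<in> l2 D" for N
    proof -
      have "summable (\<lambda>i. (cmod (rs N i))^2)"
      proof (rule summable_comparison_test[OF _ fs])
        show "\<exists>M. \<forall>n\<ge>M. norm ((cmod (rs N n))^2) \<le> f n"
          by (rule exI[of _ 0]) (simp add: f_def rs_def)
      qed
      moreover have "\<forall>i. i \<notin> D \<longrightarrow> rs N i = 0" using l2_zero[OF x] by (simp add: rs_def)
      ultimately show ?thesis unfolding l2_def by simp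
    qed
    have Ttr: "T (tr N) = 0" for N
    proof (induction N)
      case 0
      have "tr 0 = 0" by (simp add: tr_def fun_eq_iff)
      thus ?case using bounded_T0[OF T] by (simp only:)
    next
      case (Suc N)
      show ?case
      proof (cases "N \<in> D")
        case True
        have "tr (Suc N) = (\<lambda>j. 1 * tr N j + x N * basis_vec N j)"
          by (auto simp: tr_def basis_vec_def fun_eq_iff less_Suc_eq)
        moreover have "T (\<lambda>j. 1 * tr N j + x N * basis_vec N j) = (\<lambda>i. 1 * T (tr N) i + x N * T (basis_vec N) i)"
          by (rule lin[OF trl basis_l2[OF True]])
        ultimately have "T (tr (Suc N)) = (\<lambda>i. 1 * T (tr N) i + x N * T (basis_vec N) i)"
          by (simp only:)
        thus ?thesis using Suc Tb by (simp add: fun_eq_iff)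
      next
        case False
        hence "tr (Suc N) = tr N" using l2_zero[OF x False] by (auto simp: tr_def fun_eq_iff less_Suc_eq)
        thus ?thesis using Suc by simp
      qed
    qed
    have Trs: "T x = T (rs N)" for N
    proof -
      have e: "(\<lambda>j. 1 * tr N j + 1 * rs N j) = x" by (auto simp: tr_def rs_def fun_eq_iff)
      have "T (\<lambda>j. 1 * tr N j + 1 * rs N j) = (\<lambda>i. 1 * T (tr N) i + 1 * T (rs N) i)" by (rule lin[OF trl rsl])
      hence "T x = (\<lambda>i. 1 * T (tr N) i + 1 * T (rs N) i)" by (simp only: e)
      thus ?thesis using Ttr by (simp add: fun_eq_iff)
    qed
    have nrs: "norm_l2 (rs N) = sqrt (suminf f - (\<Sum>j<N. f j))" for N
    proof -
      have h: "(\<lambda>j. if j < N then f j else 0) sums (\<Sum>j<N. f j)"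
        using sums_finite[of "{..<N}" "\<lambda>j. if j < N then f j else 0"] by simp
      have g: "(\<lambda>j. if j < N then 0 else f j) = (\<lambda>j. f j - (if j < N then f j else 0))"
        by auto
      have "(\<lambda>j. if j < N then 0 else f j) sums (suminf f - (\<Sum>j<N. f j))"
        unfolding g by (rule sums_diff[OF summable_sums[OF fs] h])
      moreover have s: "(\<lambda>j. (cmod (rs N j))^2) = (\<lambda>j. if j < N then 0 else f j)"
        by (auto simp: rs_def f_def fun_eq_iff)
      ultimately have "(\<lambda>j. (cmod (rs N j))^2) sums (suminf f - (\<Sum>j<N. f j))"
        by (simp only: s)
      hence "(\<Sum>j. (cmod (rs N j))^2) = suminf f - (\<Sum>j<N. f j)"
        by (rule sums_unique[symmetric])
      thus ?thesis unfolding norm_l2_def by simp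
    qed
    have lim: "(\<lambda>N. \<bar>C\<bar> * sqrt (suminf f - (\<Sum>j<N. f j))) \<longlonglongrightarrow> 0"
    proof -
      have "(\<lambda>N. suminf f - (\<Sum>j<N. f j)) \<longlonglongrightarrow> suminf f - suminf f"
        by (rule tendsto_diff[OF tendsto_const summable_LIMSEQ[OF fs]])
      hence "(\<lambda>N. sqrt (suminf f - (\<Sum>j<N. f j))) \<longlonglongrightarrow> sqrt (suminf f - suminf f)"
        by (rule tendsto_real_sqrt)
      hence "(\<lambda>N. \<bar>C\<bar> * sqrt (suminf f - (\<Sum>j<N. f j))) \<longlonglongrightarrow> \<bar>C\<bar> * sqrt (suminf f - suminf f)"
        by (rule tendsto_mult[OF tendsto_const])
      thus ?thesis by simp
    qed
    have "T x i = 0" for i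
    proof -
      have "cmod (T x i) \<le> \<bar>C\<bar> * sqrt (suminf f - (\<Sum>j<N. f j))" for N
      proof -
        have "cmod (T x i) \<le> norm_l2 (T (rs N))" unfolding Trs[of N] by (rule comp_le_norm[OF Tl[OF rsl]])
        also have "\<dots> \<le> C * norm_l2 (rs N)" using C rsl by blast
        also have "\<dots> \<le> \<bar>C\<bar> * norm_l2 (rs N)"
          using norm_l2_nonneg[OF rsl] by (simp add: mult_right_mono)
        finally show ?thesis using nrs by simp
      qed
      hence "cmod (T x i) \<le> 0" by (intro LIMSEQ_le_const[OF lim]) auto
      thus ?thesis by simp
    qed
    thus ?thesis by (simp add: fun_eq_iff)
  qed
  thus ?thesis by (simp add: fun_eq_iff)
qed

lemma sum_single: "finite A \<Longrightarrow> a \<in> A \<Longrightarrow> (\<forall>b\<in>A. b \<noteq> a \<longrightarrow> f b = 0) \<Longrightarrow> sum f A = f a"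
  by (simp add: sum.remove sum.neutral)

lemma scale1: "scale_op 1 T = T" by (simp add: scale_op_def fun_eq_iff)
lemma scale0: "scale_op 0 T = 0" by (simp add: scale_op_def fun_eq_iff)
lemma scale_z: "scale_op c 0 = 0" by (simp add: scale_op_def fun_eq_iff)

lemma out1: "outcomes \<Omega> (Suc 0) = (\<lambda>w. [w]) ` \<Omega>"
  unfolding outcomes_def by (auto simp: length_Suc_conv)

lemma out2: "outcomes \<Omega> (Suc (Suc 0)) = (\<lambda>(a,b). [a,b]) ` (\<Omega> \<times> \<Omega>)"
  unfolding outcomes_def by (force simp: length_Suc_conv)

lemma seq1: "seq_obs D I [w] = I w (id_op D)" by (simp add: seq_obs_def)
lemma seq2: "seq_obs D I [a,b] = I a (I b (id_op D))" by (simp add: seq_obs_def)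

lemma key_facts:
  assumes ins: "instrument D \<Omega> I" and rep: "repeatable D \<Omega> I"
  shows "\<forall>a\<in>\<Omega>. \<forall>b\<in>\<Omega>. a \<noteq> b \<longrightarrow> I a (I b (id_op D)) = 0"
    and "\<forall>a\<in>\<Omega>. I a (I a (id_op D)) = I a (id_op D)"
proof -
  have fin: "finite \<Omega>" and L: "\<And>w. w \<in> \<Omega> \<Longrightarrow> linear_map D (I w)"
    and S: "(\<Sum>w\<in>\<Omega>. I w (id_op D)) = id_op D"
    using ins unfolding instrument_def by auto
  have B1: "bounded_op D (I w (id_op D))" if "w \<in> \<Omega>" for w
    using L[OF that] bounded_id unfolding linear_map_def by blast
  have B2: "bounded_op D (I a (I b (id_op D)))" if "a \<in> \<Omega>" "b \<in> \<Omega>" for a b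
    using L[OF that(1)] B1[OF that(2)] unfolding linear_map_def by blast
  show Z: "\<forall>a\<in>\<Omega>. \<forall>b\<in>\<Omega>. a \<noteq> b \<longrightarrow> I a (I b (id_op D)) = 0"
  proof (intro ballI impI)
    fix a b assume a: "a \<in> \<Omega>" and b: "b \<in> \<Omega>" and ab: "a \<noteq> b"
    have "\<forall>\<rho>. is_state D \<rho> \<longrightarrow> trace_op D (\<rho> \<circ> I a (I b (id_op D))) = 0"
      using rep a b ab unfolding repeatable_def by blast
    thus "I a (I b (id_op D)) = 0"
      using basis_zero_imp_zero[OF B2[OF a b] entries_zero[OF B2[OF a b]]] by blast
  qed
  show "\<forall>a\<in>\<Omega>. I a (I a (id_op D)) = I a (id_op D)"
  proof
    fix a assume a: "a \<in> \<Omega>"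
    have "I a (id_op D) = I a (\<Sum>w\<in>\<Omega>. I w (id_op D))" using S by simp
    also have "\<dots> = (\<Sum>w\<in>\<Omega>. I a (I w (id_op D)))"
      by (rule lin_sum[OF L[OF a] fin]) (use B1 in blast)
    also have "\<dots> = I a (I a (id_op D))"
    proof (rule sum_single[OF fin a], intro ballI impI)
      fix b assume b: "b \<in> \<Omega>" "b \<noteq> a"
      show "I a (I b (id_op D)) = 0" using Z[rule_format, OF a b(1)] b(2) by simp
    qed
    finally show "I a (I a (id_op D)) = I a (id_op D)" by simp
  qed
qed

lemma obs12:
  assumes ins: "instrument D \<Omega> I" and rep: "repeatable D \<Omega> I"
  shows "obs_equiv (outcomes \<Omega> (Suc 0)) (seq_obs D I) (outcomes \<Omega> (Suc (Suc 0))) (seq_obs D I)"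
proof -
  have fin: "finite \<Omega>" using ins instrument_def by blast
  note Z = key_facts(1)[OF ins rep] and Id = key_facts(2)[OF ins rep]
  have f1: "finite (outcomes \<Omega> (Suc 0))" "finite (outcomes \<Omega> (Suc (Suc 0)))"
    using fin unfolding out1 out2 by auto
  define k1 :: "'a list \<Rightarrow> 'a list \<Rightarrow> real" where "k1 xs ys = (if hd ys = hd xs then 1 else 0)" for xs ys
  have a1: "\<forall>xs\<in>outcomes \<Omega> (Suc 0). \<forall>ys\<in>outcomes \<Omega> (Suc (Suc 0)). 0 \<le> k1 xs ys \<and> k1 xs ys \<le> 1"
    by (simp add: k1_def)
  have b1: "\<forall>ys\<in>outcomes \<Omega> (Suc (Suc 0)). (\<Sum>xs\<in>outcomes \<Omega> (Suc 0). k1 xs ys) = 1"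
  proof
    fix ys assume ys: "ys \<in> outcomes \<Omega> (Suc (Suc 0))"
    then obtain a b where ab: "a \<in> \<Omega>" "b \<in> \<Omega>" "ys = [a,b]" unfolding out2 by auto
    have "(\<Sum>xs\<in>outcomes \<Omega> (Suc 0). k1 xs ys) = k1 [a] ys"
      by (rule sum_single[OF f1(1)]) (use ab in \<open>auto simp: out1 k1_def\<close>)
    thus "(\<Sum>xs\<in>outcomes \<Omega> (Suc 0). k1 xs ys) = 1" using ab by (simp add: k1_def)
  qed
  have c1: "\<forall>xs\<in>outcomes \<Omega> (Suc 0). seq_obs D I xs = (\<Sum>ys\<in>outcomes \<Omega> (Suc (Suc 0)). scale_op (k1 xs ys) (seq_obs D I ys))"
  proof
    fix xs assume xs: "xs \<in> outcomes \<Omega> (Suc 0)"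
    then obtain w where w: "w \<in> \<Omega>" "xs = [w]" unfolding out1 by auto
    have "(\<Sum>ys\<in>outcomes \<Omega> (Suc (Suc 0)). scale_op (k1 xs ys) (seq_obs D I ys))
       = scale_op (k1 xs [w,w]) (seq_obs D I [w,w])"
      by (rule sum_single[OF f1(2)]) (use w Z in \<open>auto simp: out2 seq2 scale0 scale1 scale_z k1_def fun_eq_iff\<close>)
    also have "\<dots> = seq_obs D I xs" using w Id by (simp add: seq1 seq2 scale1 k1_def)
    finally show "seq_obs D I xs = (\<Sum>ys\<in>outcomes \<Omega> (Suc (Suc 0)). scale_op (k1 xs ys) (seq_obs D I ys))"
      by simp
  qed
  have p1: "postproc (outcomes \<Omega> (Suc 0)) (seq_obs D I) (outcomes \<Omega> (Suc (Suc 0))) (seq_obs D I)"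
    unfolding postproc_def using a1 b1 c1 by blast
  define k2 :: "'a list \<Rightarrow> 'a list \<Rightarrow> real" where "k2 ys xs = (if ys = [hd xs, hd xs] then 1 else 0)" for xs ys
  have a2: "\<forall>ys\<in>outcomes \<Omega> (Suc (Suc 0)). \<forall>xs\<in>outcomes \<Omega> (Suc 0). 0 \<le> k2 ys xs \<and> k2 ys xs \<le> 1"
    by (simp add: k2_def)
  have b2: "\<forall>xs\<in>outcomes \<Omega> (Suc 0). (\<Sum>ys\<in>outcomes \<Omega> (Suc (Suc 0)). k2 ys xs) = 1"
  proof
    fix xs assume xs: "xs \<in> outcomes \<Omega> (Suc 0)"
    then obtain w where w: "w \<in> \<Omega>" "xs = [w]" unfolding out1 by auto
    have "(\<Sum>ys\<in>outcomes \<Omega> (Suc (Suc 0)). k2 ys xs) = k2 [w,w] xs"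
      by (rule sum_single[OF f1(2)]) (use w in \<open>auto simp: out2 k2_def\<close>)
    thus "(\<Sum>ys\<in>outcomes \<Omega> (Suc (Suc 0)). k2 ys xs) = 1" using w by (simp add: k2_def)
  qed
  have c2: "\<forall>ys\<in>outcomes \<Omega> (Suc (Suc 0)). seq_obs D I ys = (\<Sum>xs\<in>outcomes \<Omega> (Suc 0). scale_op (k2 ys xs) (seq_obs D I xs))"
  proof
    fix ys assume ys: "ys \<in> outcomes \<Omega> (Suc (Suc 0))"
    then obtain a b where ab: "a \<in> \<Omega>" "b \<in> \<Omega>" "ys = [a,b]" unfolding out2 by auto
    show "seq_obs D I ys = (\<Sum>xs\<in>outcomes \<Omega> (Suc 0). scale_op (k2 ys xs) (seq_obs D I xs))"
    proof (cases "a = b")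
      case True
      have "(\<Sum>xs\<in>outcomes \<Omega> (Suc 0). scale_op (k2 ys xs) (seq_obs D I xs))
         = scale_op (k2 ys [a]) (seq_obs D I [a])"
        by (rule sum_single[OF f1(1)]) (use ab True in \<open>auto simp: out1 scale0 k2_def\<close>)
      also have "\<dots> = seq_obs D I ys" using ab True Id by (simp add: seq1 seq2 scale1 k2_def)
      finally show ?thesis by simp
    next
      case False
      have "(\<Sum>xs\<in>outcomes \<Omega> (Suc 0). scale_op (k2 ys xs) (seq_obs D I xs)) = 0"
        by (rule sum.neutral) (use ab False in \<open>auto simp: out1 scale0 k2_def\<close>)
      moreover have "I a (I b (id_op D)) = 0" using Z ab False by blast
      hence "seq_obs D I ys = 0" using ab by (simp only: seq2)
      ultimately show ?thesis by (simp only:)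
    qed
  qed
  have p2: "postproc (outcomes \<Omega> (Suc (Suc 0))) (seq_obs D I) (outcomes \<Omega> (Suc 0)) (seq_obs D I)"
    unfolding postproc_def using a2 b2 c2 by blast
  show ?thesis using p1 p2 unfolding obs_equiv_def by blast
qed

theorem mainTheorem3:
  fixes D :: "nat set" and \<Omega> :: "'w set" and I :: "'w \<Rightarrow> op \<Rightarrow> op"
  assumes "instrument D \<Omega> I"
    and "repeatable D \<Omega> I"
  shows "sat D \<Omega> I = 1"
proof -
  define P where "P n = (n \<ge> 1 \<and> obs_equiv (outcomes \<Omega> n) (seq_obs D I) (outcomes \<Omega> (Suc n)) (seq_obs D I))" for n
  have P1: "P 1" unfolding P_def using obs12[OF assms] by simp
  have L: "(LEAST n. P n) = 1" by (rule Least_equality) (use P1 P_def in auto)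
  have E: "\<exists>n\<ge>1. obs_equiv (outcomes \<Omega> n) (seq_obs D I) (outcomes \<Omega> (Suc n)) (seq_obs D I)"
    using P1 P_def by blast
  show ?thesis unfolding sat_def using E L unfolding P_def by (simp add: one_enat_def)
qed

end
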